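(* There exists a closed convex cone $\mathcal{K}\subseteq \mathbb{R}^4$ that is nice but not amenable.
   Context: A face of a closed convex set $C$ is a closed convex subset $F\subseteq C$ such that whenever $x,y\in C$ and $\alpha x+(1-\alpha)y\in F$ for some $\alpha\in(0,1)$, then $x,y\in F$. For a set $S$, $\mathcal{K}^*$ denotes the dual cone $\{y: \langle y,x\rangle\ge 0\ \forall x\in\mathcal{K}\}$ and $S^\perp$ the orthogonal complement. A closed convex cone $\mathcal{K}$ is nice (facially dual complete) if $\mathcal{F}^*=\mathcal{K}^*+\mathcal{F}^\perp$ for every face $\mathcal{F}$ of $\mathcal{K}$. A face $F$ of a closed convex set $C$ is amenable if for every bounded set $B$ there exists $\kappa>0$ such that $\operatorname{dist}(x,F)\le\kappa\operatorname{dist}(x,C)$ for all $x\in(\operatorname{aff}F)\cap B$; $C$ is amenable if all its faces are amenable. (For a cone this is equivalent to: for each face $\mathcal{F}$ there is $\kappa>0$ with $\operatorname{dist}(x,\mathcal{F})\le\kappa\operatorname{dist}(x,\mathcal{K})$ for all $x\in\operatorname{span}\mathcal{F}$.) *)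

theory Defs
  imports "HOL-Analysis.Analysis"
begin

definition is_face :: "'a::real_inner set \<Rightarrow> 'a set \<Rightarrow> bool" where
  "is_face F C \<longleftrightarrow> closed F \<and> convex F \<and> F \<subseteq> C \<and>
     (\<forall>x\<in>C. \<forall>y\<in>C. \<forall>\<alpha>::real. 0 < \<alpha> \<and> \<alpha> < 1 \<and> \<alpha> *\<^sub>R x + (1 - \<alpha>) *\<^sub>R y \<in> F \<longrightarrow> x \<in> F \<and> y \<in> F)"

definition dual_cone :: "'a::real_inner set \<Rightarrow> 'a set" where
  "dual_cone K = {y. \<forall>x\<in>K. inner y x \<ge> 0}"

definition orth_compl :: "'a::real_inner set \<Rightarrow> 'a set" where
  "orth_compl S = {y. \<forall>x\<in>S. inner y x = 0}"

definition nice_cone :: "'a::real_inner set \<Rightarrow> bool" where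
  "nice_cone K \<longleftrightarrow> (\<forall>F. is_face F K \<longrightarrow>
     dual_cone F = {a + b | a b. a \<in> dual_cone K \<and> b \<in> orth_compl F})"

definition amenable_face :: "'a::euclidean_space set \<Rightarrow> 'a set \<Rightarrow> bool" where
  "amenable_face F C \<longleftrightarrow> (\<forall>B. bounded B \<longrightarrow>
     (\<exists>\<kappa>>0. \<forall>x \<in> (affine hull F) \<inter> B. infdist x F \<le> \<kappa> * infdist x C))"

definition amenable :: "'a::euclidean_space set \<Rightarrow> bool" where
  "amenable C \<longleftrightarrow> (\<forall>F. is_face F C \<longrightarrow> amenable_face F C)"

end

theory Submission
  imports Defs
begin


definition mk4 :: "real \<Rightarrow> real \<Rightarrow> real \<Rightarrow> real \<Rightarrow> real^4" where
  "mk4 a b c d = (\<chi> i. if i = 1 then a else if i = 2 then b else if i = 3 then c else d)"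

lemma mk4_nth[simp]: "mk4 a b c d $ 1 = a" "mk4 a b c d $ 2 = b" "mk4 a b c d $ 3 = c" "mk4 a b c d $ 4 = d"
  by (simp_all add: mk4_def)

lemma vec4_eq: "(u::real^4) = v \<longleftrightarrow> u$1 = v$1 \<and> u$2 = v$2 \<and> u$3 = v$3 \<and> u$4 = v$4"
  by (auto simp: vec_eq_iff forall_4)

lemma inner4: "inner (u::real^4) v = u$1* v$1 + u$2* v$2 + u$3* v$3 + u$4* v$4"
  by (simp add: inner_vec_def sum_4)

lemma norm4: "norm (u::real^4) = sqrt ((u$1)^2 + (u$2)^2 + (u$3)^2 + (u$4)^2)"
  by (simp add: norm_eq_sqrt_inner inner4 power2_eq_square)

definition pn :: "real^4 \<Rightarrow> real" where "pn v = sqrt ((v$1)^2 + (v$2)^2)"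
definition hp :: "real^4 \<Rightarrow> real" where "hp v = max 0 (pn v - v$4)"

lemma pn_cmod: "pn v = cmod (Complex (v$1) (v$2))"
  by (simp add: pn_def cmod_def)

lemma pn_nonneg: "0 \<le> pn v" by (simp add: pn_def)

lemma pn_add: "pn (a + b) \<le> pn a + pn b"
proof -
  have "Complex ((a+b)$1) ((a+b)$2) = Complex (a$1) (a$2) + Complex (b$1) (b$2)"
    by (simp add: complex_eq_iff)
  then show ?thesis unfolding pn_cmod by (metis norm_triangle_ineq)
qed

lemma pn_add_eq:
  assumes "pn (a + b) = pn a + pn b"
  shows "pn a * b$1 = pn b * a$1 \<and> pn a * b$2 = pn b * a$2"
proof -
  have "Complex ((a+b)$1) ((a+b)$2) = Complex (a$1) (a$2) + Complex (b$1) (b$2)"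
    by (simp add: complex_eq_iff)
  then have "cmod (Complex (a$1) (a$2)) *\<^sub>R Complex (b$1) (b$2) = cmod (Complex (b$1) (b$2)) *\<^sub>R Complex (a$1) (a$2)"
    using assms unfolding pn_cmod by (metis norm_triangle_eq)
  then show ?thesis unfolding pn_cmod by (simp add: complex_eq_iff)
qed

lemma pn_scale: "pn (c *\<^sub>R v) = \<bar>c\<bar> * pn v"
proof -
  have "(c * v$1)^2 + (c* v$2)^2 = c^2 * ((v$1)^2 + (v$2)^2)" by (simp add: algebra_simps power2_eq_square)
  then show ?thesis by (simp add: pn_def real_sqrt_mult)
qed

lemma pn_zero: "pn v = 0 \<longleftrightarrow> v$1 = 0 \<and> v$2 = 0"
  by (simp add: pn_def)

lemma cs_pn: "a^2 + b^2 = 1 \<Longrightarrow> a * v$1 + b * v$2 \<le> pn v"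
proof -
  assume h: "a^2 + b^2 = 1"
  have e: "(a^2+b^2) * ((v$1)^2 + (v$2)^2) - (a * v$1 + b * v$2)^2 = (a * v$2 - b * v$1)^2"
    by (simp add: power2_eq_square algebra_simps)
  have "(a * v$1 + b * v$2)^2 \<le> (a^2+b^2) * ((v$1)^2 + (v$2)^2)"
    using e by (metis diff_ge_0_iff_ge zero_le_power2)
  then show ?thesis unfolding pn_def using h by (simp add: real_le_rsqrt)
qed

lemma comp_le_pn: "v$1 \<le> pn v" "v$2 \<le> pn v" "\<bar>v$1\<bar> \<le> pn v" "\<bar>v$2\<bar> \<le> pn v"
  unfolding pn_def by (auto intro: real_le_rsqrt real_sqrt_abs simp: )

lemma hp_nonneg: "0 \<le> hp v" by (simp add: hp_def)
lemma hp_add: "hp (a + b) \<le> hp a + hp b"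
  using pn_add[of a b] by (simp add: hp_def)
lemma hp_scale: "0 \<le> c \<Longrightarrow> hp (c *\<^sub>R v) = c * hp v"
  by (simp add: hp_def pn_scale max_mult_distrib_left algebra_simps flip: max_def)



definition Lset :: "(real \<times> real \<times> real) set" where
  "Lset = {((1-a)*a, (1-a)*b, 1-a) | a b. a^2 + b^2 = 1} \<union> {(1,0,1)}"

definition Kc :: "(real^4) set" where
  "Kc = {v. 0 \<le> v$4 \<and> 0 \<le> v$3 \<and>
     (\<forall>(\<alpha>,\<beta>,\<gamma>)\<in>Lset. v$4 * (\<alpha> * v$1 + \<beta> * v$2 - \<gamma> * v$4) + (hp v)^2 \<le> v$4 * v$3)}"

definition Fc :: "(real^4) set" where
  "Fc = {v. v$3 = 0 \<and> pn v \<le> v$4}"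

lemma unit_bounds: "a^2 + b^2 = (1::real) \<Longrightarrow> \<bar>a\<bar> \<le> 1 \<and> \<bar>b\<bar> \<le> 1"
proof -
  assume h: "a^2 + b^2 = (1::real)"
  have "a^2 \<le> 1" "b^2 \<le> 1" using h zero_le_power2[of a] zero_le_power2[of b] by linarith+
  then show ?thesis by (simp add: abs_square_le_1)
qed

lemma L0: "(0,0,0) \<in> Lset"
proof -
  have "(0::real,0::real,0::real) = ((1-1)*1, (1-1)*0, 1-1) \<and> (1::real)^2 + 0^2 = 1" by simp
  then show ?thesis unfolding Lset_def by blast
qed

lemma Lbound: "(\<alpha>,\<beta>,\<gamma>) \<in> Lset \<Longrightarrow> \<bar>\<alpha>\<bar> \<le> 2 \<and> \<bar>\<beta>\<bar> \<le> 2 \<and> \<bar>\<gamma>\<bar> \<le> 2"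
proof -
  assume "(\<alpha>,\<beta>,\<gamma>) \<in> Lset"
  then consider "(\<alpha>,\<beta>,\<gamma>) = (1,0,1)" | a b where "a^2+b^2 = 1" "\<alpha> = (1-a)*a" "\<beta> = (1-a)*b" "\<gamma> = 1-a"
    unfolding Lset_def by auto
  then show ?thesis
  proof cases
    case 1 then show ?thesis by auto
  next
    case 2
    then have u: "\<bar>a\<bar> \<le> 1" "\<bar>b\<bar> \<le> 1" using unit_bounds by auto
    then have "\<bar>1 - a\<bar> \<le> 2" by auto
    moreover have "\<bar>(1-a)*a\<bar> \<le> 2 * 1" unfolding abs_mult using u \<open>\<bar>1 - a\<bar> \<le> 2\<close>
      by (intro mult_mono) auto
    moreover have "\<bar>(1-a)*b\<bar> \<le> 2 * 1" unfolding abs_mult using u \<open>\<bar>1 - a\<bar> \<le> 2\<close>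
      by (intro mult_mono) auto
    ultimately show ?thesis using 2 by auto
  qed
qed

lemma Lneg: "(\<alpha>,\<beta>,\<gamma>) \<in> Lset \<Longrightarrow> pn v \<le> v$4 \<Longrightarrow> \<alpha> * v$1 + \<beta> * v$2 - \<gamma> * v$4 \<le> 0"
proof -
  assume A: "(\<alpha>,\<beta>,\<gamma>) \<in> Lset" and P: "pn v \<le> v$4"
  from A consider "(\<alpha>,\<beta>,\<gamma>) = (1,0,1)" | a b where "a^2+b^2 = 1" "\<alpha> = (1-a)*a" "\<beta> = (1-a)*b" "\<gamma> = 1-a"
    unfolding Lset_def by auto
  then show ?thesis
  proof cases
    case 1 then show ?thesis using comp_le_pn(1)[of v] P by auto
  next
    case 2
    then have "a \<le> 1" using unit_bounds[OF 2(1)] by auto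
    have "a * v$1 + b * v$2 - v$4 \<le> 0" using cs_pn[OF 2(1), of v] P by auto
    then have "(1-a) * (a * v$1 + b * v$2 - v$4) \<le> 0" using \<open>a \<le> 1\<close>
      by (simp add: mult_nonneg_nonpos)
    moreover have "\<alpha> * v$1 + \<beta> * v$2 - \<gamma> * v$4 = (1-a) * (a * v$1 + b * v$2 - v$4)"
      unfolding 2(2-4) by (simp add: algebra_simps)
    ultimately show ?thesis by linarith
  qed
qed

lemma Lnice: "n1^2 + n2^2 = 1 \<Longrightarrow> \<exists>\<mu>>0. (\<mu>*n1, \<mu>*n2, \<mu>) \<in> Lset"
proof -
  assume h: "n1^2 + n2^2 = 1"
  show ?thesis
  proof (cases "n1 = 1")
    case True
    then have "n2 = 0" using h by simp
    then show ?thesis using True by (auto simp: Lset_def intro!: exI[of _ 1])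
  next
    case False
    then have "n1 < 1" using unit_bounds[OF h] by auto
    then show ?thesis using h unfolding Lset_def
      by (intro exI[of _ "1 - n1"]) (auto simp: mult.commute)
  qed
qed

lemma Lsmall: "(\<alpha>,\<beta>,\<gamma>) \<in> Lset \<Longrightarrow> \<alpha> + \<beta> * t - \<gamma> \<le> t^4/2"
proof -
  assume A: "(\<alpha>,\<beta>,\<gamma>) \<in> Lset"
  from A consider "(\<alpha>,\<beta>,\<gamma>) = (1,0,1)" | a b where "a^2+b^2 = 1" "\<alpha> = (1-a)*a" "\<beta> = (1-a)*b" "\<gamma> = 1-a"
    unfolding Lset_def by auto
  then show ?thesis
  proof cases
    case 1 then show ?thesis by auto
  next
    case 2
    define d where "d = 1 - a"
    have d0: "0 \<le> d" using unit_bounds[OF 2(1)] d_def by auto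
    have "b^2 = d * (2 - d)" using 2(1) unfolding d_def by (simp add: power2_eq_square algebra_simps)
    then have e: "b^2 = 2*d - d*d" by (simp add: algebra_simps)
    have "d*d \<ge> 0" using d0 by simp
    then have bb: "b^2 \<le> 2*d" using e by linarith
    have "\<alpha> + \<beta> * t - \<gamma> = d * b * t - d^2" unfolding 2 d_def by (simp add: power2_eq_square algebra_simps)
    also have "d * b * t \<le> d^2/2 + b^2*t^2/2"
      using zero_le_power2[of "d - b*t"] by (simp add: power2_eq_square algebra_simps)
    also have "b^2*t^2 \<le> 2*d*t^2" using bb by (simp add: mult_right_mono)
    finally have "\<alpha> + \<beta> * t - \<gamma> \<le> d^2/2 + d*t^2 - d^2" by simp
    also have "\<dots> \<le> t^4/2"
      using zero_le_power2[of "d - t^2"] by (simp add: power2_eq_square algebra_simps power4_eq_xxxx)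
    finally show ?thesis .
  qed
qed

lemma KcI: "0 \<le> v$4 \<Longrightarrow> 0 \<le> v$3 \<Longrightarrow> (\<And>\<alpha> \<beta> \<gamma>. (\<alpha>,\<beta>,\<gamma>) \<in> Lset \<Longrightarrow> v$4 * (\<alpha> * v$1 + \<beta> * v$2 - \<gamma> * v$4) + (hp v)^2 \<le> v$4 * v$3) \<Longrightarrow> v \<in> Kc"
  unfolding Kc_def by auto

lemma KcD: assumes "v \<in> Kc" shows "0 \<le> v$4" "0 \<le> v$3"
  "(\<alpha>,\<beta>,\<gamma>) \<in> Lset \<Longrightarrow> v$4 * (\<alpha> * v$1 + \<beta> * v$2 - \<gamma> * v$4) + (hp v)^2 \<le> v$4 * v$3"
  using assms unfolding Kc_def by auto

lemma Kc_w0: assumes "v \<in> Kc" "v$4 = 0" shows "v$1 = 0" "v$2 = 0"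
proof -
  have "(hp v)^2 \<le> 0" using KcD(3)[OF assms(1) L0] assms(2) by simp
  then have "hp v = 0" by simp
  then have "pn v = 0" using assms(2) pn_nonneg[of v] by (simp add: hp_def)
  then show "v$1 = 0" "v$2 = 0" by (auto simp: pn_zero)
qed

lemma Kc_pos: assumes "v \<in> Kc" "v$4 > 0" "(\<alpha>,\<beta>,\<gamma>) \<in> Lset"
  shows "(\<alpha> * v$1 + \<beta> * v$2 - \<gamma> * v$4) + (hp v)^2 / v$4 \<le> v$3"
proof -
  have "v$4 * (\<alpha> * v$1 + \<beta> * v$2 - \<gamma> * v$4) + (hp v)^2 \<le> v$4 * v$3" using KcD(3)[OF assms(1,3)] .
  then show ?thesis using assms(2) by (simp add: field_simps)
qed

lemma Kc_scale: "v \<in> Kc \<Longrightarrow> 0 \<le> c \<Longrightarrow> c *\<^sub>R v \<in> Kc"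
proof -
  assume v: "v \<in> Kc" and c: "0 \<le> c"
  show ?thesis
  proof (rule KcI)
    show "0 \<le> (c *\<^sub>R v)$4" "0 \<le> (c *\<^sub>R v)$3" using KcD[OF v] c by auto
    fix \<alpha> \<beta> \<gamma> assume L: "(\<alpha>,\<beta>,\<gamma>) \<in> Lset"
    have "c^2 * (v$4 * (\<alpha> * v$1 + \<beta> * v$2 - \<gamma> * v$4) + (hp v)^2) \<le> c^2 * (v$4 * v$3)"
      using KcD(3)[OF v L] by (simp add: mult_left_mono)
    then show "(c *\<^sub>R v)$4 * (\<alpha> * (c *\<^sub>R v)$1 + \<beta> * (c *\<^sub>R v)$2 - \<gamma> * (c *\<^sub>R v)$4) + (hp (c *\<^sub>R v))^2 \<le> (c *\<^sub>R v)$4 * (c *\<^sub>R v)$3"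
      using c by (simp add: hp_scale power2_eq_square algebra_simps)
  qed
qed

lemma titu: fixes wa wb ha hb :: real assumes "0 < wa" "0 < wb" shows "(ha + hb)^2 / (wa + wb) \<le> ha^2/wa + hb^2/wb"
proof -
  have "(ha + hb)^2 * wa * wb \<le> (ha^2 * wb + hb^2 * wa) * (wa + wb)"
    using zero_le_power2[of "ha*wb - hb*wa"] by (simp add: power2_eq_square algebra_simps)
  then show ?thesis using assms by (simp add: field_simps)
qed

lemma Kc_add: "a \<in> Kc \<Longrightarrow> b \<in> Kc \<Longrightarrow> a + b \<in> Kc"
proof -
  assume a: "a \<in> Kc" and b: "b \<in> Kc"
  show ?thesis
  proof (cases "a$4 = 0")
    case True
    note z = Kc_w0[OF a True]
    have "a + b = b + a$3 *\<^sub>R axis 3 1" by (simp add: vec4_eq True z axis_def)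
    show ?thesis
    proof (rule KcI)
      show "0 \<le> (a + b)$4" "0 \<le> (a + b)$3" using KcD[OF a] KcD[OF b] by auto
      fix \<alpha> \<beta> \<gamma> assume L: "(\<alpha>,\<beta>,\<gamma>) \<in> Lset"
      have "hp (a + b) = hp b" unfolding hp_def pn_def using True z by simp
      moreover have "b$4 * a$3 \<ge> 0" using KcD[OF a] KcD[OF b] by simp
      ultimately show "(a + b)$4 * (\<alpha> * (a + b)$1 + \<beta> * (a + b)$2 - \<gamma> * (a + b)$4) + (hp (a + b))^2 \<le> (a + b)$4 * (a + b)$3"
        using KcD(3)[OF b L] True z by (simp add: algebra_simps)
    qed
  next
    case Fa: False
    show ?thesis
    proof (cases "b$4 = 0")
      case True
      note z = Kc_w0[OF b True]
      show ?thesis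
      proof (rule KcI)
        show "0 \<le> (a + b)$4" "0 \<le> (a + b)$3" using KcD[OF a] KcD[OF b] by auto
        fix \<alpha> \<beta> \<gamma> assume L: "(\<alpha>,\<beta>,\<gamma>) \<in> Lset"
        have "hp (a + b) = hp a" unfolding hp_def pn_def using True z by simp
        moreover have "a$4 * b$3 \<ge> 0" using KcD[OF a] KcD[OF b] by simp
        ultimately show "(a + b)$4 * (\<alpha> * (a + b)$1 + \<beta> * (a + b)$2 - \<gamma> * (a + b)$4) + (hp (a + b))^2 \<le> (a + b)$4 * (a + b)$3"
          using KcD(3)[OF a L] True z by (simp add: algebra_simps)
      qed
    next
      case False
      have wa: "a$4 > 0" using KcD(1)[OF a] Fa by auto
      have wb: "b$4 > 0" using KcD(1)[OF b] False by auto
      show ?thesis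
      proof (rule KcI)
        show "0 \<le> (a + b)$4" "0 \<le> (a + b)$3" using KcD[OF a] KcD[OF b] by auto
        fix \<alpha> \<beta> \<gamma> assume L: "(\<alpha>,\<beta>,\<gamma>) \<in> Lset"
        have h1: "(hp (a+b))^2 \<le> (hp a + hp b)^2"
          using hp_add[of a b] hp_nonneg[of "a+b"] by (simp add: power_mono)
        have h2: "(hp a + hp b)^2 / (a$4 + b$4) \<le> (hp a)^2/a$4 + (hp b)^2/b$4" using titu wa wb by blast
        have "(hp (a+b))^2 / (a$4 + b$4) \<le> (hp a)^2/a$4 + (hp b)^2/b$4"
          using h1 h2 wa wb by (meson add_pos_pos divide_right_mono less_le order_trans)
        also have "\<dots> \<le> (a$3 - (\<alpha> * a$1 + \<beta> * a$2 - \<gamma> * a$4)) + (b$3 - (\<alpha> * b$1 + \<beta> * b$2 - \<gamma> * b$4))"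
          using Kc_pos[OF a wa L] Kc_pos[OF b wb L] by simp
        finally have "(hp (a+b))^2 / (a$4 + b$4) \<le> (a + b)$3 - (\<alpha> * (a + b)$1 + \<beta> * (a + b)$2 - \<gamma> * (a + b)$4)"
          by (simp add: algebra_simps)
        then show "(a + b)$4 * (\<alpha> * (a + b)$1 + \<beta> * (a + b)$2 - \<gamma> * (a + b)$4) + (hp (a + b))^2 \<le> (a + b)$4 * (a + b)$3"
          using wa wb by (simp add: field_simps)
      qed
    qed
  qed
qed

lemma Kc_cone: "cone Kc"
  unfolding cone_def using Kc_scale by blast

lemma Kc_convex: "convex Kc"
  unfolding convex_def using Kc_scale Kc_add by simp

lemma Kc_closed: "closed Kc"
proof -
  have eq: "Kc = {v. 0 \<le> v$4} \<inter> {v. 0 \<le> v$3} \<inter> (\<Inter>l\<in>Lset. {v. v$4 * (fst l * v$1 + fst (snd l) * v$2 - snd (snd l) * v$4) + (hp v)^2 \<le> v$4 * v$3})"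
    unfolding Kc_def case_prod_beta by auto
  have c: "continuous_on UNIV hp" unfolding hp_def pn_def by (intro continuous_intros)
  show ?thesis unfolding eq
    by (intro closed_Int closed_INT ballI closed_Collect_le continuous_intros c)
qed

lemma Kc_pointed: "v \<in> Kc \<Longrightarrow> -v \<in> Kc \<Longrightarrow> v = 0"
proof -
  assume a: "v \<in> Kc" "-v \<in> Kc"
  then have w: "v$4 = 0" "v$3 = 0" using KcD(1,2)[OF a(1)] KcD(1,2)[OF a(2)] by auto
  then show ?thesis using Kc_w0[OF a(1)] by (simp add: vec4_eq)
qed

lemma Fc_iff: "v \<in> Fc \<longleftrightarrow> v \<in> Kc \<and> v$3 = 0"
proof
  assume v: "v \<in> Fc"
  then have p: "pn v \<le> v$4" "v$3 = 0" by (auto simp: Fc_def)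
  have "v \<in> Kc"
  proof (rule KcI)
    show "0 \<le> v$4" using p pn_nonneg[of v] by linarith
    show "0 \<le> v$3" using p by simp
    fix \<alpha> \<beta> \<gamma> assume L: "(\<alpha>,\<beta>,\<gamma>) \<in> Lset"
    have "hp v = 0" using p by (simp add: hp_def)
    moreover have "v$4 * (\<alpha> * v$1 + \<beta> * v$2 - \<gamma> * v$4) \<le> 0"
      using Lneg[OF L p(1)] \<open>0 \<le> v$4\<close> by (simp add: mult_nonneg_nonpos)
    ultimately show "v$4 * (\<alpha> * v$1 + \<beta> * v$2 - \<gamma> * v$4) + (hp v)^2 \<le> v$4 * v$3" using p by simp
  qed
  then show "v \<in> Kc \<and> v$3 = 0" using p by simp
next
  assume h: "v \<in> Kc \<and> v$3 = 0"
  then have "(hp v)^2 \<le> 0" using KcD(3)[OF _ L0, of v] by simp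
  then have "hp v = 0" by simp
  then show "v \<in> Fc" using h by (simp add: Fc_def hp_def)
qed



lemma hp_cong: "v$1 = u$1 \<Longrightarrow> v$2 = u$2 \<Longrightarrow> v$4 = u$4 \<Longrightarrow> hp v = hp u"
  by (simp add: hp_def pn_def)

lemma cont_eps: "isCont g s \<Longrightarrow> (e::real) > 0 \<Longrightarrow> \<exists>d>0. \<forall>v. dist v s < d \<longrightarrow> \<bar>g v - g s\<bar> < e"
  unfolding continuous_at_eps_delta[symmetric] using continuous_at_eps_delta by (metis dist_real_def)

lemma hp_isCont: "isCont hp s"
  unfolding hp_def pn_def by (intro continuous_intros)

lemma interior_crit:
  assumes w: "s$4 > 0" and d: "\<delta> > 0"
    and H: "\<And>\<alpha> \<beta> \<gamma>. (\<alpha>,\<beta>,\<gamma>) \<in> Lset \<Longrightarrow> s$4 * (\<alpha> * s$1 + \<beta> * s$2 - \<gamma> * s$4) + (hp s)^2 + \<delta> \<le> s$4 * s$3"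
  shows "s \<in> interior Kc"
proof -
  have "(hp s)^2 + \<delta> \<le> s$4 * s$3" using H[OF L0] by simp
  then have "s$4 * s$3 > 0" using d zero_le_power2[of "hp s"] by linarith
  then have s3: "s$3 > 0" using w by (simp add: zero_less_mult_iff)
  define e where "e = min (\<delta>/8) (min (s$4) (s$3))"
  have e: "e > 0" "e \<le> \<delta>/8" "e \<le> s$4" "e \<le> s$3" using d w s3 by (auto simp: e_def)
  define g0 where "g0 = (\<lambda>v::real^4. v$4 * v$3 - (hp v)^2)"
  have c0: "isCont g0 s" unfolding g0_def by (intro continuous_intros hp_isCont)
  obtain d0 where d0: "d0 > 0" "\<forall>v. dist v s < d0 \<longrightarrow> \<bar>g0 v - g0 s\<bar> < e" using cont_eps[OF c0 e(1)] by auto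
  obtain d1 where d1: "d1 > 0" "\<forall>v. dist v s < d1 \<longrightarrow> \<bar>v$4 * v$1 - s$4 * s$1\<bar> < e"
    using cont_eps[where g="\<lambda>v::real^4. v$4 * v$1" and s=s and e=e] e(1) by (auto intro: continuous_intros)
  obtain d2 where d2: "d2 > 0" "\<forall>v. dist v s < d2 \<longrightarrow> \<bar>v$4 * v$2 - s$4 * s$2\<bar> < e"
    using cont_eps[where g="\<lambda>v::real^4. v$4 * v$2" and s=s and e=e] e(1) by (auto intro: continuous_intros)
  obtain d3 where d3: "d3 > 0" "\<forall>v. dist v s < d3 \<longrightarrow> \<bar>v$4 * v$4 - s$4 * s$4\<bar> < e"
    using cont_eps[where g="\<lambda>v::real^4. v$4 * v$4" and s=s and e=e] e(1) by (auto intro: continuous_intros)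
  obtain d4 where d4: "d4 > 0" "\<forall>v. dist v s < d4 \<longrightarrow> \<bar>v$4 - s$4\<bar> < e"
    using cont_eps[where g="\<lambda>v::real^4. v$4" and s=s and e=e] e(1) by (auto intro: continuous_intros)
  obtain d5 where d5: "d5 > 0" "\<forall>v. dist v s < d5 \<longrightarrow> \<bar>v$3 - s$3\<bar> < e"
    using cont_eps[where g="\<lambda>v::real^4. v$3" and s=s and e=e] e(1) by (auto intro: continuous_intros)
  define dd where "dd = min d0 (min d1 (min d2 (min d3 (min d4 d5))))"
  have dd: "dd > 0" using d0 d1 d2 d3 d4 d5 by (simp add: dd_def)
  have "ball s dd \<subseteq> Kc"
  proof
    fix v assume "v \<in> ball s dd"
    then have dv: "dist v s < dd" by (simp add: dist_commute)
    have b0: "\<bar>g0 v - g0 s\<bar> < e" using d0 dv by (simp add: dd_def)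
    have b1: "\<bar>v$4 * v$1 - s$4 * s$1\<bar> < e" using d1 dv by (simp add: dd_def)
    have b2: "\<bar>v$4 * v$2 - s$4 * s$2\<bar> < e" using d2 dv by (simp add: dd_def)
    have b3: "\<bar>v$4 * v$4 - s$4 * s$4\<bar> < e" using d3 dv by (simp add: dd_def)
    have b4: "\<bar>v$4 - s$4\<bar> < e" using d4 dv by (simp add: dd_def)
    have b5: "\<bar>v$3 - s$3\<bar> < e" using d5 dv by (simp add: dd_def)
    show "v \<in> Kc"
    proof (rule KcI)
      show "0 \<le> v$4" using b4 e by linarith
      show "0 \<le> v$3" using b5 e by linarith
      fix \<alpha> \<beta> \<gamma> assume L: "(\<alpha>,\<beta>,\<gamma>) \<in> Lset"
      note lb = Lbound[OF L]
      have m1: "\<bar>\<alpha> * (v$4 * v$1 - s$4 * s$1)\<bar> \<le> 2 * e"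
        unfolding abs_mult using lb b1 by (intro mult_mono) auto
      have m2: "\<bar>\<beta> * (v$4 * v$2 - s$4 * s$2)\<bar> \<le> 2 * e"
        unfolding abs_mult using lb b2 by (intro mult_mono) auto
      have m3: "\<bar>\<gamma> * (v$4 * v$4 - s$4 * s$4)\<bar> \<le> 2 * e"
        unfolding abs_mult using lb b3 by (intro mult_mono) auto
      have ev: "v$4 * (\<alpha> * v$1 + \<beta> * v$2 - \<gamma> * v$4) - s$4 * (\<alpha> * s$1 + \<beta> * s$2 - \<gamma> * s$4)
          = \<alpha> * (v$4 * v$1 - s$4 * s$1) + \<beta> * (v$4 * v$2 - s$4 * s$2) - \<gamma> * (v$4 * v$4 - s$4 * s$4)"
        by (simp add: algebra_simps)
      have "v$4 * (\<alpha> * v$1 + \<beta> * v$2 - \<gamma> * v$4) \<le> s$4 * (\<alpha> * s$1 + \<beta> * s$2 - \<gamma> * s$4) + 6 * e"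
        using ev m1 m2 m3 by (smt (verit) abs_le_iff)
      moreover have "g0 s - e \<le> g0 v" using b0 by linarith
      ultimately show "v$4 * (\<alpha> * v$1 + \<beta> * v$2 - \<gamma> * v$4) + (hp v)^2 \<le> v$4 * v$3"
        using H[OF L] e(2) e(1) d unfolding g0_def by argo
    qed
  qed
  then show ?thesis using dd mem_interior by blast
qed



definition indep :: "real^4 \<Rightarrow> real^4 \<Rightarrow> bool" where
  "indep a b \<longleftrightarrow> (\<forall>\<alpha> \<beta>. \<alpha> *\<^sub>R a + \<beta> *\<^sub>R b = 0 \<longrightarrow> \<alpha> = 0 \<and> \<beta> = 0)"

lemma indepD: "indep a b \<Longrightarrow> \<alpha> *\<^sub>R a + \<beta> *\<^sub>R b = 0 \<Longrightarrow> \<alpha> = 0 \<and> \<beta> = 0"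
  unfolding indep_def by blast

lemma indep_nz: "indep a b \<Longrightarrow> a \<noteq> 0 \<and> b \<noteq> 0"
  unfolding indep_def by (metis add.right_neutral add_0 one_neq_zero scale_one scale_zero_left)

lemma indep_sym: "indep a b \<Longrightarrow> indep b a"
  unfolding indep_def by (metis add.commute)

lemma gapl: fixes x y p q :: real assumes "x \<noteq> y" "p > 0" "q > 0"
  shows "p*x + q*y > p * min x y + q * min x y"
proof (cases "x < y")
  case True
  then have "q * x < q * y" using assms by simp
  then show ?thesis using True by (simp add: min_def)
next
  case False
  then have "y < x" using assms by simp
  then have "p * y < p * x" using assms by simp
  then show ?thesis using \<open>y < x\<close> by (simp add: min_def)
qed

lemma strict_w0:
  assumes a: "a \<in> Kc" and b: "b \<in> Kc" and i: "indep a b" and w: "a$4 = 0"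
  shows "\<exists>\<delta>>0. (a+b)$4 > 0 \<and> (\<forall>\<alpha> \<beta> \<gamma>. (\<alpha>,\<beta>,\<gamma>) \<in> Lset \<longrightarrow>
      (a+b)$4 * (\<alpha> * (a+b)$1 + \<beta> * (a+b)$2 - \<gamma> * (a+b)$4) + (hp (a+b))^2 + \<delta> \<le> (a+b)$4 * (a+b)$3)"
proof -
  note z = Kc_w0[OF a w]
  have a3: "a$3 > 0"
  proof (rule ccontr)
    assume "\<not> a$3 > 0" then have "a$3 = 0" using KcD(2)[OF a] by simp
    then have "a = 0" using z w by (simp add: vec4_eq)
    then show False using indep_nz[OF i] by simp
  qed
  have b4: "b$4 > 0"
  proof (rule ccontr)
    assume "\<not> b$4 > 0" then have b4: "b$4 = 0" using KcD(1)[OF b] by simp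
    note zb = Kc_w0[OF b b4]
    have "b$3 *\<^sub>R a + (- a$3) *\<^sub>R b = 0" using z w zb b4 by (simp add: vec4_eq)
    then have "b$3 = 0 \<and> - a$3 = 0" by (rule indepD[OF i])
    then show False using a3 by simp
  qed
  have hpe: "hp (a+b) = hp b" by (rule hp_cong) (simp_all add: z w)
  show ?thesis
  proof (intro exI[of _ "b$4 * a$3"] conjI allI impI)
    show "b$4 * a$3 > 0" using a3 b4 by simp
    show "(a+b)$4 > 0" using b4 w by simp
    fix \<alpha> \<beta> \<gamma> assume L: "(\<alpha>,\<beta>,\<gamma>) \<in> Lset"
    show "(a+b)$4 * (\<alpha> * (a+b)$1 + \<beta> * (a+b)$2 - \<gamma> * (a+b)$4) + (hp (a+b))^2 + b$4 * a$3 \<le> (a+b)$4 * (a+b)$3"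
      using KcD(3)[OF b L] hpe z w by (simp add: algebra_simps)
  qed
qed

lemma strict_pos:
  assumes a: "a \<in> Kc" and b: "b \<in> Kc" and i: "indep a b" and nf: "\<not> (a \<in> Fc \<and> b \<in> Fc)"
  shows "\<exists>\<delta>>0. (a+b)$4 > 0 \<and> (\<forall>\<alpha> \<beta> \<gamma>. (\<alpha>,\<beta>,\<gamma>) \<in> Lset \<longrightarrow>
      (a+b)$4 * (\<alpha> * (a+b)$1 + \<beta> * (a+b)$2 - \<gamma> * (a+b)$4) + (hp (a+b))^2 + \<delta> \<le> (a+b)$4 * (a+b)$3)"
proof (cases "a$4 = 0")
  case True then show ?thesis using strict_w0[OF a b i] by blast
next
  case Fa: False
  show ?thesis
  proof (cases "b$4 = 0")
    case True
    have e: "b + a = a + b" by (rule add.commute)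
    show ?thesis using strict_w0[OF b a indep_sym[OF i] True] unfolding e .
  next
    case False
    have wa: "a$4 > 0" using KcD(1)[OF a] Fa by auto
    have wb: "b$4 > 0" using KcD(1)[OF b] False by auto
    define s where "s = a + b"
    have s4: "s$4 > 0" using wa wb by (simp add: s_def)
    show ?thesis
    proof (cases "b$4 * a$1 = a$4 * b$1 \<and> b$4 * a$2 = a$4 * b$2")
      case True
      have ne: "a$3 * b$4 \<noteq> b$3 * a$4"
      proof
        assume "a$3 * b$4 = b$3 * a$4"
        then have "b$4 *\<^sub>R a + (- a$4) *\<^sub>R b = 0" using True by (simp add: vec4_eq algebra_simps)
        then have "b$4 = 0" using indepD[OF i] by blast
        then show False using wb by simp
      qed
      define r where "r = s$4 / a$4"
      define r' where "r' = s$4 / b$4"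
      have r: "r > 0" "r' > 0" using s4 wa wb by (auto simp: r_def r'_def)
      have sa: "s$1 = r * a$1" "s$2 = r * a$2" "s$4 = r * a$4"
        using True wa unfolding r_def s_def by (auto simp: field_simps)
      have sb: "s$1 = r' * b$1" "s$2 = r' * b$2" "s$4 = r' * b$4"
        using True wb unfolding r'_def s_def by (auto simp: field_simps)
      have hsa: "hp s = r * hp a"
        using hp_cong[of s "r *\<^sub>R a"] sa hp_scale[of r a] r by simp
      have hsb: "hp s = r' * hp b"
        using hp_cong[of s "r' *\<^sub>R b"] sb hp_scale[of r' b] r by simp
      define m where "m = min (a$3 / a$4) (b$3 / b$4)"
      have bndA: "s$4 * (\<alpha> * s$1 + \<beta> * s$2 - \<gamma> * s$4) + (hp s)^2 \<le> s$4 * s$4 * (a$3 / a$4)"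
        if L: "(\<alpha>,\<beta>,\<gamma>) \<in> Lset" for \<alpha> \<beta> \<gamma>
      proof -
        have "s$4 * (\<alpha> * s$1 + \<beta> * s$2 - \<gamma> * s$4) + (hp s)^2 = r^2 * (a$4 * (\<alpha> * a$1 + \<beta> * a$2 - \<gamma> * a$4) + (hp a)^2)"
          using sa hsa by (simp add: power2_eq_square algebra_simps)
        also have "\<dots> \<le> r^2 * (a$4 * a$3)" using KcD(3)[OF a L] by (simp add: mult_left_mono)
        also have "\<dots> = s$4 * s$4 * (a$3 / a$4)" using sa wa by (simp add: power2_eq_square field_simps)
        finally show ?thesis .
      qed
      have bndB: "s$4 * (\<alpha> * s$1 + \<beta> * s$2 - \<gamma> * s$4) + (hp s)^2 \<le> s$4 * s$4 * (b$3 / b$4)"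
        if L: "(\<alpha>,\<beta>,\<gamma>) \<in> Lset" for \<alpha> \<beta> \<gamma>
      proof -
        have "s$4 * (\<alpha> * s$1 + \<beta> * s$2 - \<gamma> * s$4) + (hp s)^2 = r'^2 * (b$4 * (\<alpha> * b$1 + \<beta> * b$2 - \<gamma> * b$4) + (hp b)^2)"
          using sb hsb by (simp add: power2_eq_square algebra_simps)
        also have "\<dots> \<le> r'^2 * (b$4 * b$3)" using KcD(3)[OF b L] by (simp add: mult_left_mono)
        also have "\<dots> = s$4 * s$4 * (b$3 / b$4)" using sb wb by (simp add: power2_eq_square field_simps)
        finally show ?thesis .
      qed
      have s3: "s$3 = a$4 * (a$3/a$4) + b$4 * (b$3/b$4)" using wa wb by (simp add: s_def)
      have gap: "s$3 > s$4 * m"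
      proof -
        have "a$3/a$4 \<noteq> b$3/b$4" using ne wa wb by (simp add: field_simps)
        then have "a$4 * (a$3/a$4) + b$4 * (b$3/b$4) > a$4 * m + b$4 * m"
          unfolding m_def by (rule gapl[OF _ wa wb])
        moreover have "s$4 * m = a$4 * m + b$4 * m" by (simp add: s_def distrib_right)
        ultimately show ?thesis using s3 by linarith
      qed
      show ?thesis
      proof (intro exI[of _ "s$4 * s$3 - s$4 * s$4 * m"] conjI allI impI)
        have "s$4 * (s$4 * m) < s$4 * s$3" using gap s4 by (rule mult_strict_left_mono)
        then show "s$4 * s$3 - s$4 * s$4 * m > 0" by (simp add: mult.assoc)
        show "(a+b)$4 > 0" using s4 by (simp add: s_def)
        fix \<alpha> \<beta> \<gamma> assume L: "(\<alpha>,\<beta>,\<gamma>) \<in> Lset"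
        have "s$4 * (\<alpha> * s$1 + \<beta> * s$2 - \<gamma> * s$4) + (hp s)^2 \<le> s$4 * s$4 * m"
          using bndA[OF L] bndB[OF L] unfolding m_def by (cases "a$3/a$4 \<le> b$3/b$4") (simp_all only: min_def if_True if_False)
        then show "(a+b)$4 * (\<alpha> * (a+b)$1 + \<beta> * (a+b)$2 - \<gamma> * (a+b)$4) + (hp (a+b))^2 + (s$4 * s$3 - s$4 * s$4 * m) \<le> (a+b)$4 * (a+b)$3"
          unfolding s_def by simp
      qed
    next
      case NotPar: False
      show ?thesis
      proof (cases "pn a \<le> a$4 \<and> pn b \<le> b$4")
        case True
        have "a$3 + b$3 > 0"
        proof -
          have "a$3 \<noteq> 0 \<or> b$3 \<noteq> 0" using nf True unfolding Fc_def by auto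
          then show ?thesis using KcD(2)[OF a] KcD(2)[OF b] by auto
        qed
        have ps: "pn s \<le> s$4" using pn_add[of a b] True by (simp add: s_def)
        then have hs: "hp s = 0" by (simp add: hp_def)
        show ?thesis
        proof (intro exI[of _ "s$4 * s$3"] conjI allI impI)
          show "s$4 * s$3 > 0" using s4 \<open>a$3 + b$3 > 0\<close> by (simp add: s_def)
          show "(a+b)$4 > 0" using s4 by (simp add: s_def)
          fix \<alpha> \<beta> \<gamma> assume L: "(\<alpha>,\<beta>,\<gamma>) \<in> Lset"
          have "s$4 * (\<alpha> * s$1 + \<beta> * s$2 - \<gamma> * s$4) \<le> 0"
            using Lneg[OF L ps] s4 by (simp add: mult_nonneg_nonpos)
          then show "(a+b)$4 * (\<alpha> * (a+b)$1 + \<beta> * (a+b)$2 - \<gamma> * (a+b)$4) + (hp (a+b))^2 + s$4 * s$3 \<le> (a+b)$4 * (a+b)$3"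
            using hs unfolding s_def by simp
        qed
      next
        case NotDisk: False
        define D where "D = (hp a)^2/a$4 + (hp b)^2/b$4 - (hp s)^2/s$4"
        have Dpos: "D > 0"
        proof (rule ccontr)
          assume "\<not> D > 0"
          then have c1: "(hp a)^2/a$4 + (hp b)^2/b$4 \<le> (hp s)^2/s$4" by (simp add: D_def)
          have t: "(hp a + hp b)^2/s$4 \<le> (hp a)^2/a$4 + (hp b)^2/b$4"
            using titu[OF wa wb] by (simp add: s_def)
          have "(hp a + hp b)^2 \<le> (hp s)^2" using c1 t s4
            by (meson divide_le_cancel not_less order_trans)
          then have "hp a + hp b \<le> hp s"
            using hp_nonneg[of s] by (rule power2_le_imp_le)
          then have hsum: "hp s = hp a + hp b" using hp_add[of a b] by (simp add: s_def)
          have eqt: "(hp a)^2/a$4 + (hp b)^2/b$4 = (hp a + hp b)^2/s$4" using c1 t hsum by simp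
          have "(hp a * b$4 - hp b * a$4)^2 = 0"
          proof -
            have "((hp a)^2 * b$4 + (hp b)^2 * a$4) * s$4 = (hp a + hp b)^2 * (a$4 * b$4)"
              using eqt wa wb s4 by (simp add: field_simps)
            then show ?thesis unfolding s_def by (simp add: power2_eq_square algebra_simps)
          qed
          then have hq: "hp a * b$4 = hp b * a$4" by simp
          have "hp a > 0 \<or> hp b > 0" using NotDisk by (auto simp: hp_def)
          then have "hp s > 0" using hsum hp_nonneg[of a] hp_nonneg[of b] by linarith
          then have hs': "hp s = pn s - s$4" by (simp add: hp_def)
          have ha: "hp a \<ge> pn a - a$4" "hp b \<ge> pn b - b$4" by (auto simp: hp_def)
          have pa: "pn s \<le> pn a + pn b" using pn_add[of a b] by (simp add: s_def)
          have s4e: "s$4 = a$4 + b$4" by (simp add: s_def)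
          have eqs: "pn s = pn a + pn b" "hp a = pn a - a$4" "hp b = pn b - b$4"
            using hs' ha pa hsum s4e by linarith+
          have q: "pn a * b$4 = pn b * a$4" using hq eqs(2,3) by (simp add: algebra_simps)
          have pe: "pn a * b$1 = pn b * a$1 \<and> pn a * b$2 = pn b * a$2"
            using pn_add_eq eqs(1) by (simp add: s_def)
          have "pn a > 0"
          proof (rule ccontr)
            assume "\<not> pn a > 0" then have "pn a = 0" using pn_nonneg[of a] by simp
            then have "hp a = - a$4" using eqs by simp
            then show False using hp_nonneg[of a] wa by simp
          qed
          have "b$4 * a$1 = a$4 * b$1"
          proof -
            have "pn a * (b$4 * a$1) = (pn a * b$4) * a$1" by (simp add: mult.assoc)
            also have "\<dots> = (pn b * a$1) * a$4" using q by (simp add: algebra_simps)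
            also have "\<dots> = (pn a * b$1) * a$4" using pe by simp
            finally have "pn a * (b$4 * a$1) = pn a * (a$4 * b$1)" by (simp add: algebra_simps)
            then show ?thesis using \<open>pn a > 0\<close> by simp
          qed
          moreover have "b$4 * a$2 = a$4 * b$2"
          proof -
            have "pn a * (b$4 * a$2) = (pn a * b$4) * a$2" by (simp add: mult.assoc)
            also have "\<dots> = (pn b * a$2) * a$4" using q by (simp add: algebra_simps)
            also have "\<dots> = (pn a * b$2) * a$4" using pe by simp
            finally have "pn a * (b$4 * a$2) = pn a * (a$4 * b$2)" by (simp add: algebra_simps)
            then show ?thesis using \<open>pn a > 0\<close> by simp
          qed
          ultimately show False using NotPar by simp
        qed
        show ?thesis
        proof (intro exI[of _ "s$4 * D"] conjI allI impI)
          show "s$4 * D > 0" using s4 Dpos by simp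
          show "(a+b)$4 > 0" using s4 by (simp add: s_def)
          fix \<alpha> \<beta> \<gamma> assume L: "(\<alpha>,\<beta>,\<gamma>) \<in> Lset"
          have "s$4 * (\<alpha> * s$1 + \<beta> * s$2 - \<gamma> * s$4) + (hp s)^2 + s$4 * D
              = s$4 * ((\<alpha> * a$1 + \<beta> * a$2 - \<gamma> * a$4) + (hp a)^2/a$4 + ((\<alpha> * b$1 + \<beta> * b$2 - \<gamma> * b$4) + (hp b)^2/b$4))"
            unfolding D_def using s4 by (simp add: s_def field_simps)
          also have "\<dots> \<le> s$4 * (a$3 + b$3)"
            using Kc_pos[OF a wa L] Kc_pos[OF b wb L] s4 by (intro mult_left_mono) auto
          finally show "(a+b)$4 * (\<alpha> * (a+b)$1 + \<beta> * (a+b)$2 - \<gamma> * (a+b)$4) + (hp (a+b))^2 + s$4 * D \<le> (a+b)$4 * (a+b)$3"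
            unfolding s_def by simp
        qed
      qed
    qed
  qed
qed

lemma strict_interior:
  assumes "a \<in> Kc" "b \<in> Kc" "indep a b" "\<not> (a \<in> Fc \<and> b \<in> Fc)"
  shows "a + b \<in> interior Kc"
proof -
  obtain \<delta> where d: "\<delta> > 0" and w: "(a+b)$4 > 0" and H: "\<forall>\<alpha> \<beta> \<gamma>. (\<alpha>,\<beta>,\<gamma>) \<in> Lset \<longrightarrow>
      (a+b)$4 * (\<alpha> * (a+b)$1 + \<beta> * (a+b)$2 - \<gamma> * (a+b)$4) + (hp (a+b))^2 + \<delta> \<le> (a+b)$4 * (a+b)$3"
    using strict_pos[OF assms] by blast
  show ?thesis by (rule interior_crit[OF w d]) (use H in blast)
qed



lemma pn_uminus[simp]: "pn (- v) = pn v" by (simp add: pn_def)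

lemma face_sub: "is_face P C \<Longrightarrow> P \<subseteq> C" by (simp add: is_face_def)

lemma face_absorb:
  assumes f: "is_face P Kc" and m: "m \<in> P" and u: "u \<in> Kc" and e: "\<epsilon> > 0"
    and m': "m + \<epsilon> *\<^sub>R (m - u) \<in> Kc"
  shows "u \<in> P"
proof -
  define \<alpha> where "\<alpha> = \<epsilon> / (1 + \<epsilon>)"
  have a: "0 < \<alpha>" "\<alpha> < 1" using e by (auto simp: \<alpha>_def field_simps)
  have h1: "(1 - \<alpha>) * (1 + \<epsilon>) = 1" and h2: "(1 - \<alpha>) * \<epsilon> = \<alpha>"
    using e by (simp_all add: \<alpha>_def field_simps)
  have "\<alpha> *\<^sub>R u + (1 - \<alpha>) *\<^sub>R (m + \<epsilon> *\<^sub>R (m - u))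
      = \<alpha> *\<^sub>R u + ((1 - \<alpha>) * (1 + \<epsilon>)) *\<^sub>R m - ((1 - \<alpha>) * \<epsilon>) *\<^sub>R u"
    by (simp add: algebra_simps)
  also have "\<dots> = m" unfolding h1 h2 by simp
  finally have "\<alpha> *\<^sub>R u + (1 - \<alpha>) *\<^sub>R (m + \<epsilon> *\<^sub>R (m - u)) = m" .
  then show ?thesis using f u m' m a unfolding is_face_def by metis
qed

lemma interior_face:
  assumes f: "is_face P Kc" and m: "m \<in> P" and i: "m \<in> interior Kc"
  shows "P = Kc"
proof
  show "P \<subseteq> Kc" using face_sub[OF f] .
  show "Kc \<subseteq> P"
  proof
    fix u assume u: "u \<in> Kc"
    obtain r where r: "r > 0" "ball m r \<subseteq> Kc" using i mem_interior by blast
    define \<epsilon> where "\<epsilon> = r / (2 * (norm (m - u) + 1))"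
    have d: "norm (m - u) + 1 > 0" by (simp add: add_nonneg_pos)
    have e: "\<epsilon> > 0" unfolding \<epsilon>_def by (intro divide_pos_pos) (use r d in auto)
    have "norm (\<epsilon> *\<^sub>R (m - u)) = \<epsilon> * norm (m - u)" using e by simp
    also have "\<dots> < r"
    proof -
      have "\<epsilon> * norm (m - u) = r * (norm (m - u) / (2 * (norm (m - u) + 1)))" by (simp add: \<epsilon>_def)
      also have "norm (m - u) / (2 * (norm (m - u) + 1)) < 1"
        using d by (subst divide_less_eq_1_pos) auto
      then have "r * (norm (m - u) / (2 * (norm (m - u) + 1))) < r * 1"
        using r(1) by (intro mult_strict_left_mono) auto
      finally show ?thesis by simp
    qed
    finally have "m + \<epsilon> *\<^sub>R (m - u) \<in> ball m r" by (simp add: dist_norm)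
    then show "u \<in> P" using face_absorb[OF f m u e] r(2) by blast
  qed
qed

lemma indep_scale: "indep a b \<Longrightarrow> c > 0 \<Longrightarrow> indep (c *\<^sub>R a) (c *\<^sub>R b)"
  unfolding indep_def
proof (intro allI impI)
  fix \<alpha> \<beta> assume i: "\<forall>\<alpha> \<beta>. \<alpha> *\<^sub>R a + \<beta> *\<^sub>R b = 0 \<longrightarrow> \<alpha> = 0 \<and> \<beta> = 0" and c: "c > 0"
    and h: "\<alpha> *\<^sub>R c *\<^sub>R a + \<beta> *\<^sub>R c *\<^sub>R b = 0"
  have "(\<alpha> * c) *\<^sub>R a + (\<beta> * c) *\<^sub>R b = 0" using h by simp
  then have "\<alpha> * c = 0 \<and> \<beta> * c = 0" using i by blast
  then show "\<alpha> = 0 \<and> \<beta> = 0" using c by simp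
qed

lemma Fc_scale: "c > 0 \<Longrightarrow> c *\<^sub>R a \<in> Fc \<longleftrightarrow> a \<in> Fc"
  by (auto simp: Fc_def pn_scale)

lemma Fc_sub: "Fc \<subseteq> Kc" using Fc_iff by blast

lemma relint_Fc:
  assumes a: "a \<in> Fc" and b: "b \<in> Fc" and i: "indep a b" and u: "u \<in> Fc"
  shows "\<exists>\<epsilon>>0. (a + b) + \<epsilon> *\<^sub>R ((a + b) - u) \<in> Fc"
proof -
  define m where "m = a + b"
  have pa: "pn a \<le> a$4" "a$3 = 0" and pb: "pn b \<le> b$4" "b$3 = 0" using a b by (auto simp: Fc_def)
  have strict: "pn m < m$4"
  proof (rule ccontr)
    assume "\<not> pn m < m$4"
    then have ge: "pn m \<ge> a$4 + b$4" by (simp add: m_def)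
    have le: "pn m \<le> pn a + pn b" using pn_add by (simp add: m_def)
    then have eqs: "pn a = a$4" "pn b = b$4" "pn (a + b) = pn a + pn b" using ge pa pb by (simp_all add: m_def)
    have pe: "pn a * b$1 = pn b * a$1 \<and> pn a * b$2 = pn b * a$2" using pn_add_eq[OF eqs(3)] .
    have "b$4 *\<^sub>R a + (- a$4) *\<^sub>R b = 0" using pe eqs pa pb by (simp add: vec4_eq algebra_simps)
    then have "b$4 = 0 \<and> - a$4 = 0" by (rule indepD[OF i])
    then have "pn a = 0" "a$4 = 0" using eqs by auto
    then have "a = 0" using pa by (simp add: vec4_eq pn_zero)
    then show False using indep_nz[OF i] by simp
  qed
  have pu: "pn u \<le> u$4" "u$3 = 0" using u by (auto simp: Fc_def)
  define g where "g = m$4 - pn m"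
  define c where "c = pn u + u$4"
  have g: "g > 0" using strict by (simp add: g_def)
  have c: "c \<ge> 0" using pn_nonneg[of u] pu by (simp add: c_def)
  define \<epsilon> where "\<epsilon> = g / (c + 1)"
  have e: "\<epsilon> > 0" using g c by (simp add: \<epsilon>_def)
  have ec: "\<epsilon> * c \<le> g"
  proof -
    have "\<epsilon> * c = g * (c / (c + 1))" by (simp add: \<epsilon>_def)
    also have "\<dots> \<le> g * 1" using g c by (intro mult_left_mono) auto
    finally show ?thesis by simp
  qed
  have eq: "m + \<epsilon> *\<^sub>R (m - u) = (1 + \<epsilon>) *\<^sub>R m + (- \<epsilon>) *\<^sub>R u" by (simp add: algebra_simps)
  have "pn (m + \<epsilon> *\<^sub>R (m - u)) \<le> (1 + \<epsilon>) * pn m + \<epsilon> * pn u"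
    unfolding eq using pn_add[of "(1 + \<epsilon>) *\<^sub>R m" "(- \<epsilon>) *\<^sub>R u"] e by (simp add: pn_scale)
  also have "\<dots> \<le> (m + \<epsilon> *\<^sub>R (m - u))$4"
  proof -
    have "\<epsilon> * pn m \<le> \<epsilon> * m$4" using strict e by (intro mult_left_mono) auto
    moreover have "\<epsilon> * pn u + \<epsilon> * u$4 \<le> m$4 - pn m" using ec unfolding g_def c_def by (simp add: algebra_simps)
    moreover have "(m + \<epsilon> *\<^sub>R (m - u))$4 = m$4 + \<epsilon> * m$4 - \<epsilon> * u$4" by (simp add: algebra_simps)
    moreover have "(1 + \<epsilon>) * pn m + \<epsilon> * pn u = pn m + \<epsilon> * pn m + \<epsilon> * pn u" by (simp add: algebra_simps)
    ultimately show ?thesis by linarith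
  qed
  finally have "pn (m + \<epsilon> *\<^sub>R (m - u)) \<le> (m + \<epsilon> *\<^sub>R (m - u))$4" .
  moreover have "(m + \<epsilon> *\<^sub>R (m - u))$3 = 0" using pa pb pu by (simp add: m_def)
  ultimately show ?thesis using e unfolding m_def Fc_def by auto
qed



lemma face_convex: "is_face P C \<Longrightarrow> convex P" by (simp add: is_face_def)

lemma face_prop:
  assumes "is_face P C" "x \<in> C" "y \<in> C" "0 < \<alpha>" "\<alpha> < 1" "\<alpha> *\<^sub>R x + (1 - \<alpha>) *\<^sub>R y \<in> P"
  shows "x \<in> P \<and> y \<in> P"
proof -
  have "\<forall>x\<in>C. \<forall>y\<in>C. \<forall>\<alpha>::real. 0 < \<alpha> \<and> \<alpha> < 1 \<and> \<alpha> *\<^sub>R x + (1 - \<alpha>) *\<^sub>R y \<in> P \<longrightarrow> x \<in> P \<and> y \<in> P"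
    using assms(1) unfolding is_face_def by (elim conjE)
  then show ?thesis using assms(2-6) by blast
qed

lemma Kc_zero: "0 \<in> Kc"
  by (rule KcI) (auto simp: hp_def pn_def)

lemma Fc_is_face: "is_face Fc Kc"
proof -
  have ax: "inner (axis 3 (1::real)) v = v$3" for v :: "real^4"
    by (simp add: inner4 axis_def)
  have eq: "Fc = Kc \<inter> {v. inner (axis 3 1) v = 0}"
    unfolding ax using Fc_iff by blast
  have "closed Fc" unfolding eq by (intro closed_Int Kc_closed closed_hyperplane)
  moreover have "convex Fc" unfolding eq by (intro convex_Int Kc_convex convex_hyperplane)
  moreover have "\<forall>x\<in>Kc. \<forall>y\<in>Kc. \<forall>\<alpha>::real. 0 < \<alpha> \<and> \<alpha> < 1 \<and> \<alpha> *\<^sub>R x + (1 - \<alpha>) *\<^sub>R y \<in> Fc \<longrightarrow> x \<in> Fc \<and> y \<in> Fc"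
  proof (intro ballI allI impI)
    fix x y and \<alpha> :: real assume x: "x \<in> Kc" and y: "y \<in> Kc" and h: "0 < \<alpha> \<and> \<alpha> < 1 \<and> \<alpha> *\<^sub>R x + (1 - \<alpha>) *\<^sub>R y \<in> Fc"
    have "(\<alpha> *\<^sub>R x + (1 - \<alpha>) *\<^sub>R y)$3 = 0" using h Fc_iff by blast
    then have "\<alpha> * x$3 + (1 - \<alpha>) * y$3 = 0" by simp
    moreover have "\<alpha> * x$3 \<ge> 0" "(1 - \<alpha>) * y$3 \<ge> 0" using KcD(2)[OF x] KcD(2)[OF y] h by auto
    ultimately have "\<alpha> * x$3 = 0" "(1 - \<alpha>) * y$3 = 0" by linarith+
    then have "x$3 = 0" "y$3 = 0" using h by auto
    then show "x \<in> Fc \<and> y \<in> Fc" using x y Fc_iff by blast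
  qed
  ultimately show ?thesis unfolding is_face_def using Fc_sub by (intro conjI)
qed

lemma ray_face:
  assumes f: "is_face P Kc" and v: "v \<in> P" and c: "c \<ge> 0"
  shows "c *\<^sub>R v \<in> P"
proof -
  have vK: "v \<in> Kc" using face_sub[OF f] v by blast
  have "(1/2) *\<^sub>R ((2::real) *\<^sub>R v) + (1 - 1/2) *\<^sub>R (0::real^4) = v" by simp
  then have z: "0 \<in> P" using face_prop[OF f Kc_scale[OF vK, of 2] Kc_zero, of "1/2"] v by auto
  show ?thesis
  proof (cases "c \<le> 1")
    case True
    have "c *\<^sub>R v + (1 - c) *\<^sub>R 0 \<in> P" using convexD[OF face_convex[OF f] v z, of c "1 - c"] c True by simp
    then show ?thesis by simp
  next
    case False
    have "(1/c) *\<^sub>R (c *\<^sub>R v) + (1 - 1/c) *\<^sub>R (0::real^4) = v" using False by simp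
    then show ?thesis using face_prop[OF f Kc_scale[OF vK c] Kc_zero, of "1/c"] v False by auto
  qed
qed

lemma classify:
  assumes f: "is_face P Kc"
  shows "P = {} \<or> P = Kc \<or> P = Fc \<or> (\<exists>v\<in>Kc. P = {c *\<^sub>R v | c. c \<ge> 0})"
proof (cases "\<exists>a\<in>P. \<exists>b\<in>P. indep a b")
  case True
  then obtain a b where ab: "a \<in> P" "b \<in> P" "indep a b" by blast
  have sub: "P \<subseteq> Kc" using face_sub[OF f] .
  define a' where "a' = (1/2::real) *\<^sub>R a"
  define b' where "b' = (1/2::real) *\<^sub>R b"
  have aK: "a' \<in> Kc" "b' \<in> Kc" using sub ab Kc_scale unfolding a'_def b'_def by auto
  have i': "indep a' b'" unfolding a'_def b'_def using indep_scale[OF ab(3)] by simp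
  have mP: "a' + b' \<in> P" using convexD[OF face_convex[OF f] ab(1) ab(2), of "1/2" "1/2"] by (simp add: a'_def b'_def)
  have Fa: "a' \<in> Fc \<longleftrightarrow> a \<in> Fc" "b' \<in> Fc \<longleftrightarrow> b \<in> Fc" unfolding a'_def b'_def by (simp_all add: Fc_scale)
  show ?thesis
  proof (cases "a \<in> Fc \<and> b \<in> Fc")
    case bothF: True
    show ?thesis
    proof (cases "P \<subseteq> Fc")
      case True
      have "Fc \<subseteq> P"
      proof
        fix u assume u: "u \<in> Fc"
        have aF: "a' \<in> Fc" "b' \<in> Fc" using Fa bothF by simp_all
        obtain \<epsilon> where e: "\<epsilon> > 0" "(a' + b') + \<epsilon> *\<^sub>R ((a' + b') - u) \<in> Fc"
          using relint_Fc[OF aF i' u] by blast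
        have uK: "u \<in> Kc" using u Fc_sub by blast
        have mK: "(a' + b') + \<epsilon> *\<^sub>R ((a' + b') - u) \<in> Kc" using e(2) Fc_sub by blast
        show "u \<in> P" by (rule face_absorb[OF f mP uK e(1) mK])
      qed
      then have "P = Fc" using True by (rule equalityI[rotated])
      then show ?thesis by simp
    next
      case False
      then obtain u where u: "u \<in> P" "u \<notin> Fc" by blast
      have uK: "u \<in> Kc" using sub u by blast
      have iu: "indep u a"
        unfolding indep_def
      proof (intro allI impI)
        fix \<alpha> \<beta> assume h: "\<alpha> *\<^sub>R u + \<beta> *\<^sub>R a = 0"
        have "\<alpha> = 0"
        proof (rule ccontr)
          assume "\<alpha> \<noteq> 0"
          have "\<alpha> *\<^sub>R u = (- \<beta>) *\<^sub>R a" using h by (simp add: eq_neg_iff_add_eq_0)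
          then have "(1/\<alpha>) *\<^sub>R (\<alpha> *\<^sub>R u) = (1/\<alpha>) *\<^sub>R ((- \<beta>) *\<^sub>R a)" by simp
          then have "u = (- \<beta> / \<alpha>) *\<^sub>R a" using \<open>\<alpha> \<noteq> 0\<close> by simp
          then have "u$3 = 0" using bothF by (simp add: Fc_def)
          then show False using u uK Fc_iff by blast
        qed
        moreover have "a \<noteq> 0" using indep_nz[OF ab(3)] by simp
        ultimately show "\<alpha> = 0 \<and> \<beta> = 0" using h by simp
      qed
      define u' where "u' = (1/2::real) *\<^sub>R u"
      have u'K: "u' \<in> Kc" using Kc_scale[OF uK, of "1/2"] unfolding u'_def by simp
      have iu': "indep u' a'" unfolding u'_def a'_def using indep_scale[OF iu] by simp
      have nF: "\<not> (u' \<in> Fc \<and> a' \<in> Fc)" using u Fc_scale unfolding u'_def by simp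
      have mP2: "u' + a' \<in> P" using convexD[OF face_convex[OF f] u(1) ab(1), of "1/2" "1/2"] by (simp add: a'_def u'_def)
      have "P = Kc" using interior_face[OF f mP2 strict_interior[OF u'K aK(1) iu' nF]] .
      then show ?thesis by simp
    qed
  next
    case False
    then have nF: "\<not> (a' \<in> Fc \<and> b' \<in> Fc)" using Fa by simp
    have "P = Kc" using interior_face[OF f mP strict_interior[OF aK i' nF]] .
    then show ?thesis by simp
  qed
next
  case noind: False
  show ?thesis
  proof (cases "\<exists>v\<in>P. v \<noteq> 0")
    case True
    then obtain v where v: "v \<in> P" "v \<noteq> 0" by blast
    have vK: "v \<in> Kc" using face_sub[OF f] v by blast
    have "P = {c *\<^sub>R v | c. c \<ge> 0}"
    proof
      show "{c *\<^sub>R v | c. c \<ge> 0} \<subseteq> P" using ray_face[OF f v(1)] by blast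
      show "P \<subseteq> {c *\<^sub>R v | c. c \<ge> 0}"
      proof
        fix u assume u: "u \<in> P"
        have uK: "u \<in> Kc" using face_sub[OF f] u by blast
        have "\<not> indep u v" using noind u v by blast
        then obtain \<alpha> \<beta> where h: "\<alpha> *\<^sub>R u + \<beta> *\<^sub>R v = 0" "\<not> (\<alpha> = 0 \<and> \<beta> = 0)"
          unfolding indep_def by blast
        have a0: "\<alpha> \<noteq> 0" using h v by auto
        define c where "c = - \<beta> / \<alpha>"
        have uc: "u = c *\<^sub>R v"
        proof -
          have "\<alpha> *\<^sub>R u = (- \<beta>) *\<^sub>R v" using h(1) by (simp add: eq_neg_iff_add_eq_0)
          then have "(1/\<alpha>) *\<^sub>R (\<alpha> *\<^sub>R u) = (1/\<alpha>) *\<^sub>R ((- \<beta>) *\<^sub>R v)" by simp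
          then show ?thesis using a0 by (simp add: c_def)
        qed
        have "c \<ge> 0"
        proof (rule ccontr)
          assume "\<not> c \<ge> 0"
          then have "(- 1/c) *\<^sub>R u \<in> Kc" using Kc_scale[OF uK, of "-1/c"] by simp
          moreover have "(- 1/c) *\<^sub>R u = - v" using uc \<open>\<not> c \<ge> 0\<close> by simp
          ultimately have "v = 0" using Kc_pointed[OF vK] by simp
          then show False using v by simp
        qed
        then show "u \<in> {c *\<^sub>R v | c. c \<ge> 0}" using uc by blast
      qed
    qed
    then show ?thesis using vK by (intro disjI2 bexI[of _ v])
  next
    case False
    then have "P \<subseteq> {0}" by blast
    then have "P = {} \<or> P = {c *\<^sub>R (0::real^4) | c. c \<ge> 0}" by auto
    then show ?thesis
    proof
      assume "P = {}" then show ?thesis by simp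
    next
      assume "P = {c *\<^sub>R (0::real^4) | c. c \<ge> 0}"
      then show ?thesis using Kc_zero by (intro disjI2 bexI[of _ 0])
    qed
  qed
qed



lemma nice_sup: "P \<subseteq> Kc \<Longrightarrow> {a + b | a b. a \<in> dual_cone Kc \<and> b \<in> orth_compl P} \<subseteq> dual_cone P"
proof
  fix y assume P: "P \<subseteq> Kc" and "y \<in> {a + b | a b. a \<in> dual_cone Kc \<and> b \<in> orth_compl P}"
  then obtain a b where y: "y = a + b" "a \<in> dual_cone Kc" "b \<in> orth_compl P" by blast
  show "y \<in> dual_cone P" unfolding dual_cone_def
  proof
    show "\<forall>x\<in>P. 0 \<le> inner y x"
    proof
      fix x assume x: "x \<in> P"
      have "inner a x \<ge> 0" using y(2) x P unfolding dual_cone_def by blast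
      moreover have "inner b x = 0" using y(3) x unfolding orth_compl_def by blast
      ultimately show "0 \<le> inner y x" using y(1) by (simp add: inner_add_left)
    qed
  qed
qed

lemma pn_mk4: "pn (mk4 a b c d) = sqrt (a^2 + b^2)" by (simp add: pn_def)

lemma nice_Fc: "dual_cone Fc \<subseteq> {a + b | a b. a \<in> dual_cone Kc \<and> b \<in> orth_compl Fc}"
proof
  fix y assume y: "y \<in> dual_cone Fc"
  have yF: "\<And>f. f \<in> Fc \<Longrightarrow> inner y f \<ge> 0" using y unfolding dual_cone_def by blast
  have "mk4 0 0 0 1 \<in> Fc" by (simp add: Fc_def pn_mk4)
  from yF[OF this] have y4: "y$4 \<ge> 0" by (simp add: inner4)
  define \<rho> where "\<rho> = pn y"
  have r0: "\<rho> \<ge> 0" using pn_nonneg by (simp add: \<rho>_def)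
  have rsq: "(y$1)^2 + (y$2)^2 = \<rho>^2" unfolding \<rho>_def pn_def by simp
  have "mk4 (- y$1) (- y$2) 0 \<rho> \<in> Fc" by (simp add: Fc_def pn_mk4 \<rho>_def pn_def)
  then have "inner y (mk4 (- y$1) (- y$2) 0 \<rho>) \<ge> 0" using yF by blast
  then have "- ((y$1)^2 + (y$2)^2) + y$4 * \<rho> \<ge> 0" by (simp add: inner4 power2_eq_square)
  then have key: "\<rho> * (y$4 - \<rho>) \<ge> 0" using rsq by (simp add: power2_eq_square algebra_simps)
  have orthb: "mk4 0 0 c 0 \<in> orth_compl Fc" for c
    unfolding orth_compl_def by (auto simp: inner4 Fc_def)
  show "y \<in> {a + b | a b. a \<in> dual_cone Kc \<and> b \<in> orth_compl Fc}"
  proof (cases "\<rho> = 0")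
    case True
    then have z: "y$1 = 0" "y$2 = 0" using pn_zero \<rho>_def by auto
    have a: "mk4 0 0 0 (y$4) \<in> dual_cone Kc"
      unfolding dual_cone_def using y4 KcD(1) by (auto simp: inner4)
    have "y = mk4 0 0 0 (y$4) + mk4 0 0 (y$3) 0" using z by (simp add: vec4_eq)
    then show ?thesis using a orthb by blast
  next
    case False
    then have rp: "\<rho> > 0" using r0 by simp
    then have y4r: "y$4 \<ge> \<rho>" using key by (simp add: zero_le_mult_iff)
    define n1 where "n1 = - y$1 / \<rho>"
    define n2 where "n2 = - y$2 / \<rho>"
    have "n1^2 + n2^2 = ((y$1)^2 + (y$2)^2) / \<rho>^2" by (simp add: n1_def n2_def power_divide add_divide_distrib)
    then have nn: "n1^2 + n2^2 = 1" using rsq rp by simp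
    obtain \<mu> where mu: "\<mu> > 0" "(\<mu> * n1, \<mu> * n2, \<mu>) \<in> Lset" using Lnice[OF nn] by blast
    define lam where "lam = \<rho> / \<mu>"
    have lp: "lam > 0" using rp mu by (simp add: lam_def)
    have a: "mk4 (y$1) (y$2) lam (y$4) \<in> dual_cone Kc"
      unfolding dual_cone_def
    proof (intro CollectI ballI)
      fix x assume x: "x \<in> Kc"
      show "0 \<le> inner (mk4 (y$1) (y$2) lam (y$4)) x"
      proof (cases "x$4 = 0")
        case True
        then have "x$1 = 0" "x$2 = 0" using Kc_w0[OF x] by auto
        then show ?thesis using True lp KcD(2)[OF x] by (simp add: inner4)
      next
        case False
        then have x4: "x$4 > 0" using KcD(1)[OF x] by simp
        have "(\<mu> * n1 * x$1 + \<mu> * n2 * x$2 - \<mu> * x$4) + (hp x)^2 / x$4 \<le> x$3"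
          using Kc_pos[OF x x4 mu(2)] .
        moreover have "(hp x)^2 / x$4 \<ge> 0" using x4 by simp
        ultimately have "\<mu> * (n1 * x$1 + n2 * x$2 - x$4) \<le> x$3" by (simp add: algebra_simps)
        then have "lam * (\<mu> * (n1 * x$1 + n2 * x$2 - x$4)) \<le> lam * x$3" using lp by (simp add: mult_left_mono)
        moreover have "lam * (\<mu> * (n1 * x$1 + n2 * x$2 - x$4)) = - y$1 * x$1 - y$2 * x$2 - \<rho> * x$4"
          using rp mu(1) by (simp add: lam_def n1_def n2_def field_simps)
        moreover have "y$4 * x$4 \<ge> \<rho> * x$4" using y4r x4 by (simp add: mult_right_mono)
        ultimately show ?thesis by (simp add: inner4)
      qed
    qed
    have "y = mk4 (y$1) (y$2) lam (y$4) + mk4 0 0 (y$3 - lam) 0" by (simp add: vec4_eq)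
    then show ?thesis using a orthb by blast
  qed
qed

lemma nice_ray:
  assumes v: "v \<in> Kc"
  shows "dual_cone {c *\<^sub>R v | c. c \<ge> 0} \<subseteq> {a + b | a b. a \<in> dual_cone Kc \<and> b \<in> orth_compl {c *\<^sub>R v | c. c \<ge> 0}}"
proof
  fix y assume y: "y \<in> dual_cone {c *\<^sub>R v | c. c \<ge> 0}"
  have "v \<in> {c *\<^sub>R v | c. c \<ge> 0}" by (rule CollectI, rule exI[of _ 1]) simp
  then have yv: "inner y v \<ge> 0" using y unfolding dual_cone_def by blast
  have z: "0 \<in> dual_cone Kc" unfolding dual_cone_def by simp
  show "y \<in> {a + b | a b. a \<in> dual_cone Kc \<and> b \<in> orth_compl {c *\<^sub>R v | c. c \<ge> 0}}"
  proof (cases "v = 0")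
    case True
    have "y \<in> orth_compl {c *\<^sub>R v | c. c \<ge> 0}" unfolding orth_compl_def using True by auto
    moreover have "y = 0 + y" by simp
    ultimately show ?thesis using z by blast
  next
    case False
    define e where "e = mk4 0 0 1 1"
    have ev: "inner e v > 0"
    proof -
      have "v$3 \<ge> 0" "v$4 \<ge> 0" using KcD[OF v] by auto
      moreover have "\<not> (v$3 = 0 \<and> v$4 = 0)"
      proof
        assume h: "v$3 = 0 \<and> v$4 = 0"
        then have "v$1 = 0" "v$2 = 0" using Kc_w0[OF v] by auto
        then show False using h False by (simp add: vec4_eq)
      qed
      ultimately show ?thesis by (auto simp: e_def inner4)
    qed
    define k where "k = inner y v / inner e v"
    have k0: "k \<ge> 0" using yv ev by (simp add: k_def)
    have a: "k *\<^sub>R e \<in> dual_cone Kc"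
      unfolding dual_cone_def using k0 KcD(1,2) by (auto simp: e_def inner4)
    have b: "y - k *\<^sub>R e \<in> orth_compl {c *\<^sub>R v | c. c \<ge> 0}"
      unfolding orth_compl_def
    proof (intro CollectI ballI)
      fix x assume "x \<in> {c *\<^sub>R v | c. c \<ge> 0}"
      then obtain c where x: "x = c *\<^sub>R v" by blast
      have "inner (y - k *\<^sub>R e) v = inner y v - k * inner e v" by (simp add: inner_diff_left)
      also have "\<dots> = 0" using ev by (simp add: k_def)
      finally show "inner (y - k *\<^sub>R e) x = 0" using x by simp
    qed
    have "y = k *\<^sub>R e + (y - k *\<^sub>R e)" by simp
    then show ?thesis using a b by blast
  qed
qed

lemma Kc_nice: "nice_cone Kc"
  unfolding nice_cone_def
proof (intro allI impI)
  fix P assume f: "is_face P Kc"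
  have sub: "P \<subseteq> Kc" using face_sub[OF f] .
  have "dual_cone P \<subseteq> {a + b | a b. a \<in> dual_cone Kc \<and> b \<in> orth_compl P}"
  proof -
    from classify[OF f] consider "P = {}" | "P = Kc" | "P = Fc" | v where "v \<in> Kc" "P = {c *\<^sub>R v | c. c \<ge> 0}"
      by blast
    then show ?thesis
    proof cases
      case 1
      show ?thesis
      proof
        fix y assume "y \<in> dual_cone P"
        have "0 \<in> dual_cone Kc" unfolding dual_cone_def by simp
        moreover have "y \<in> orth_compl P" using 1 by (simp add: orth_compl_def)
        moreover have "y = 0 + y" by simp
        ultimately show "y \<in> {a + b | a b. a \<in> dual_cone Kc \<and> b \<in> orth_compl P}" by blast
      qed
    next
      case 2
      show ?thesis
      proof
        fix y assume "y \<in> dual_cone P"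
        then have "y \<in> dual_cone Kc" using 2 by simp
        moreover have "0 \<in> orth_compl P" by (simp add: orth_compl_def)
        moreover have "y = y + 0" by simp
        ultimately show "y \<in> {a + b | a b. a \<in> dual_cone Kc \<and> b \<in> orth_compl P}" by blast
      qed
    next
      case 3 then show ?thesis using nice_Fc by simp
    next
      case 4 then show ?thesis using nice_ray[OF 4(1)] by simp
    qed
  qed
  then show "dual_cone P = {a + b | a b. a \<in> dual_cone Kc \<and> b \<in> orth_compl P}"
    using nice_sup[OF sub] by (rule equalityI)
qed



lemma sqrt_small: "sqrt (1 + t^2) \<le> 1 + t^2/2"
proof (rule real_le_lsqrt)
  show "0 \<le> 1 + t^2/2" by simp
  have "(1 + t^2/2)^2 = 1 + t^2 + (t^2)^2/4" by (simp add: power2_eq_square field_simps)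
  moreover have "(t^2)^2/4 \<ge> 0" by simp
  ultimately show "1 + t^2 \<le> (1 + t^2/2)^2" by linarith
qed

lemma nonamen: "\<not> amenable_face Fc Kc"
proof -
  have main: "\<exists>x \<in> (affine hull Fc) \<inter> ball 0 2. infdist x Fc > \<kappa> * infdist x Kc" if kp: "\<kappa> > 0" for \<kappa> :: real
  proof -
    define t where "t = 1 / (1 + 6 * \<kappa>)"
    have t0: "t > 0" and t1: "t \<le> 1" using kp by (auto simp: t_def field_simps)
    have t2: "t^2 \<le> 1" using t0 t1 by (simp add: power_le_one)
    define x where "x = mk4 1 t 0 1"
    have zF: "(0::real^4) \<in> Fc" by (simp add: Fc_def pn_def)
    have aff: "affine hull Fc = span Fc" by (rule affine_hull_span_0, rule hull_inc, rule zF)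
    have u1: "mk4 1 t 0 2 \<in> Fc"
    proof -
      have "sqrt (1^2 + t^2) \<le> 2" using t2 by (intro real_le_lsqrt) auto
      then show ?thesis by (simp add: Fc_def pn_mk4)
    qed
    have u2: "mk4 0 0 0 1 \<in> Fc" by (simp add: Fc_def pn_mk4)
    have "x = mk4 1 t 0 2 - mk4 0 0 0 1" by (simp add: vec4_eq x_def)
    then have xa: "x \<in> affine hull Fc" unfolding aff using u1 u2 by (simp add: span_diff span_base)
    have xb: "x \<in> ball 0 2"
    proof -
      have "norm x = sqrt (1 + t^2 + 0 + 1)" by (simp add: norm4 x_def)
      also have "\<dots> < 2" using t2 by (intro real_less_lsqrt) auto
      finally show ?thesis by simp
    qed
    define k where "k = mk4 1 t (t^4) 1"
    have kK: "k \<in> Kc"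
    proof (rule KcI)
      show "0 \<le> k$4" "0 \<le> k$3" by (simp_all add: k_def)
      fix \<alpha> \<beta> \<gamma> assume L: "(\<alpha>,\<beta>,\<gamma>) \<in> Lset"
      have h0: "hp k \<ge> 0" by (rule hp_nonneg)
      have h1: "hp k \<le> t^2/2" using sqrt_small[of t] by (simp add: hp_def k_def pn_def)
      have "(hp k)^2 \<le> (t^2/2)^2" using h1 h0 by (rule power_mono)
      then have "(hp k)^2 \<le> t^4/4" by (simp add: power2_eq_square power4_eq_xxxx)
      moreover have "\<alpha> + \<beta> * t - \<gamma> \<le> t^4/2" by (rule Lsmall[OF L])
      moreover have "0 \<le> t^4" by simp
      ultimately have "\<alpha> + \<beta> * t - \<gamma> + (hp k)^2 \<le> t^4" by linarith
      then show "k$4 * (\<alpha> * k$1 + \<beta> * k$2 - \<gamma> * k$4) + (hp k)^2 \<le> k$4 * k$3"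
        by (simp add: k_def)
    qed
    have dK: "infdist x Kc \<le> t^4"
    proof -
      have "infdist x Kc \<le> dist x k" by (rule infdist_le[OF kK])
      also have "dist x k = sqrt ((t^4)^2)" by (simp add: dist_norm norm4 x_def k_def)
      also have "\<dots> = t^4" by (rule real_sqrt_unique) simp_all
      finally show ?thesis .
    qed
    define \<phi> where "\<phi> = mk4 1 t 0 (- (1 + t^2/2))"
    have nphi: "norm \<phi> \<le> 3"
    proof -
      have "norm \<phi> = sqrt (1 + t^2 + 0 + (1 + t^2/2)^2)" by (simp add: norm4 \<phi>_def power2_eq_square algebra_simps)
      also have "\<dots> \<le> 3"
      proof (rule real_le_lsqrt)
        have "(1 + t^2/2)^2 \<le> (3/2)^2" using t2 by (intro power_mono) auto
        moreover have "(3/2::real)^2 = 9/4" "(3::real)^2 = 9" by (simp_all add: power2_eq_square)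
        ultimately show "1 + t^2 + 0 + (1 + t^2/2)^2 \<le> 3^2" using t2 by linarith
      qed simp
      finally show ?thesis .
    qed
    have phix: "inner \<phi> x = t^2/2" by (simp add: inner4 \<phi>_def x_def power2_eq_square)
    have phif: "inner \<phi> f \<le> 0" if f: "f \<in> Fc" for f
    proof -
      define R where "R = sqrt (1 + t^2)"
      have R0: "R > 0" by (simp add: R_def add_pos_nonneg)
      have R2: "R^2 = 1 + t^2" by (simp add: R_def add_nonneg_nonneg)
      have "1 + t^2 > 0" by (simp add: add_pos_nonneg)
      then have ne: "1 + t^2 \<noteq> 0" by linarith
      have "(1/R)^2 + (t/R)^2 = 1" using R2 R0 ne by (simp add: power_divide add_divide_distrib[symmetric])
      from cs_pn[OF this, of f] have "(1/R) * f$1 + (t/R) * f$2 \<le> pn f" .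
      then have "f$1 + t * f$2 \<le> R * pn f" using R0 by (simp add: field_simps)
      also have "\<dots> \<le> R * f$4" using f R0 by (simp add: Fc_def)
      also have "\<dots> \<le> (1 + t^2/2) * f$4"
        using sqrt_small[of t] f pn_nonneg[of f] unfolding R_def Fc_def
        by (intro mult_right_mono) auto
      finally show ?thesis by (simp add: inner4 \<phi>_def algebra_simps)
    qed
    have dF: "infdist x Fc \<ge> t^2/6"
    proof -
      have "t^2/6 \<le> dist x f" if f: "f \<in> Fc" for f
      proof -
        have "t^2/2 \<le> inner \<phi> (x - f)" using phix phif[OF f] by (simp add: inner_diff_right)
        also have "\<dots> \<le> norm \<phi> * norm (x - f)" by (rule norm_cauchy_schwarz)
        also have "\<dots> \<le> 3 * norm (x - f)" using nphi by (intro mult_right_mono) auto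
        finally show ?thesis by (simp add: dist_norm)
      qed
      moreover have ne: "Fc \<noteq> {}" using zF by blast
      ultimately show ?thesis unfolding infdist_notempty[OF ne] by (intro cINF_greatest[OF ne]) auto
    qed
    have "6 * \<kappa> * t^2 < 1"
    proof -
      have "0 \<le> \<kappa> * (\<kappa> * 36)" using kp by simp
      moreover have p: "(1 + 6 * \<kappa>)^2 = 1 + (\<kappa> * 12 + \<kappa> * (\<kappa> * 36))" by (simp add: power2_eq_square algebra_simps)
      ultimately have "6 * \<kappa> < (1 + 6 * \<kappa>)^2" using kp by linarith
      then show ?thesis using kp by (simp add: t_def power_divide field_simps)
    qed
    then have "\<kappa> * t^4 < t^2/6" using t0
      by (simp add: power4_eq_xxxx power2_eq_square field_simps)
    moreover have "\<kappa> * infdist x Kc \<le> \<kappa> * t^4" using dK kp by (simp add: mult_left_mono)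
    ultimately have "infdist x Fc > \<kappa> * infdist x Kc" using dF by linarith
    then show ?thesis using xa xb by blast
  qed
  show ?thesis
    unfolding amenable_face_def
  proof
    assume A: "\<forall>B. bounded B \<longrightarrow> (\<exists>\<kappa>>0. \<forall>x\<in>affine hull Fc \<inter> B. infdist x Fc \<le> \<kappa> * infdist x Kc)"
    obtain \<kappa> where kp: "\<kappa> > 0" and H: "\<forall>x\<in>affine hull Fc \<inter> ball 0 2. infdist x Fc \<le> \<kappa> * infdist x Kc"
      using A bounded_ball by blast
    obtain x where "x \<in> affine hull Fc \<inter> ball 0 2" "infdist x Fc > \<kappa> * infdist x Kc" using main[OF kp] by blast
    then show False using H by force
  qed
qed

theorem theorem5p3:
  shows "\<exists>K :: (real^4) set. closed K \<and> convex K \<and> cone K \<and> nice_cone K \<and> \<not> amenable K"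
proof (intro exI[of _ Kc] conjI)
  show "closed Kc" by (rule Kc_closed)
  show "convex Kc" by (rule Kc_convex)
  show "cone Kc" by (rule Kc_cone)
  show "nice_cone Kc" by (rule Kc_nice)
  show "\<not> amenable Kc" unfolding amenable_def using Fc_is_face nonamen by blast
qed


end
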